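(* In the setting of the context, let $\mu_1,\mu_2$ be nowhere-equal solutions of $$\widehat e_1\cdot\nabla\mu=-C_{31}^{2}-\mu\big(C_{31}^{3}+C_{12}^{2}\big)-\mu^{2}C_{12}^{3}$$ and let $\alpha_1,\alpha_2$ be nowhere-vanishing functions satisfying $\widehat e_1\cdot\nabla\ln|\alpha_i/\Vert v\Vert|=C_{31}^{3}+\mu_iC_{12}^{3}$ for $i=1,2$. Then the Poisson vector fields $J_i=\alpha_i(\widehat e_2+\mu_i\widehat e_3)$, $i=1,2$, are compatible, i.e. $J_1+J_2$ is also a Poisson vector field.
   Context: Setting: $M$ is an oriented three-dimensional manifold with a Riemannian metric $g$; $\nabla$, $\nabla\times$ and $\times$ denote gradient, curl and cross product. A Poisson vector field is a vector field $J$ with $J\cdot(\nabla\times J)=0$; $J_1,J_2$ are compatible if $J_1+J_2$ is also Poisson. $v$ is a nowhere vanishing vector field, $\widehat e_1=v/\Vert v\Vert$, extended to a local oriented orthonormal frame $(\widehat e_1,\widehat e_2,\widehat e_3)$ with $\widehat e_3=\widehat e_1\times\widehat e_2$, and structure functions $C_{ij}^k$ defined by $[\widehat e_i,\widehat e_j]=C_{ij}^k\widehat e_k$. *)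

theory Defs
  imports "HOL-Analysis.Analysis"
begin

text \<open>Local coordinate model: an open chart domain U of R^3 (positively oriented chart),
  Riemannian metric given by its Gram matrix field g.\<close>

definition ginner :: "(real^3 \<Rightarrow> real^3^3) \<Rightarrow> real^3 \<Rightarrow> real^3 \<Rightarrow> real^3 \<Rightarrow> real" where
  "ginner g x u w = u \<bullet> (g x *v w)"

definition gnorm :: "(real^3 \<Rightarrow> real^3^3) \<Rightarrow> real^3 \<Rightarrow> real^3 \<Rightarrow> real" where
  "gnorm g x u = sqrt (ginner g x u u)"

definition riem_metric :: "(real^3 \<Rightarrow> real^3^3) \<Rightarrow> (real^3) set \<Rightarrow> bool" where
  "riem_metric g U \<longleftrightarrow> open U \<and>
     (\<forall>x\<in>U. transpose (g x) = g x \<and> (\<forall>u. u \<noteq> 0 \<longrightarrow> u \<bullet> (g x *v u) > 0)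
            \<and> g differentiable (at x))"

definition dderiv :: "(real^3 \<Rightarrow> 'b::real_normed_vector) \<Rightarrow> (real^3 \<Rightarrow> real^3) \<Rightarrow> real^3 \<Rightarrow> 'b" where
  "dderiv f X x = frechet_derivative f (at x) (X x)"

text \<open>Lie bracket, [X,Y]f = X(Yf) - Y(Xf).\<close>
definition lie_bracket :: "(real^3 \<Rightarrow> real^3) \<Rightarrow> (real^3 \<Rightarrow> real^3) \<Rightarrow> real^3 \<Rightarrow> real^3" where
  "lie_bracket X Y x = dderiv Y X x - dderiv X Y x"

definition pd :: "(real^3 \<Rightarrow> real^3) \<Rightarrow> 3 \<Rightarrow> 3 \<Rightarrow> real^3 \<Rightarrow> real" where
  "pd w j k x = (frechet_derivative w (at x) (axis j 1)) $ k"

text \<open>Riemannian curl: (curl J)^i = (1/sqrt(det g)) eps^{ijk} d_j J_k, with J_k = g_{kl} J^l.\<close>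
definition curl :: "(real^3 \<Rightarrow> real^3^3) \<Rightarrow> (real^3 \<Rightarrow> real^3) \<Rightarrow> real^3 \<Rightarrow> real^3" where
  "curl g J x = (let w = (\<lambda>y. g y *v J y) in
     (1 / sqrt (det (g x))) *\<^sub>R
       vector [pd w 2 3 x - pd w 3 2 x, pd w 3 1 x - pd w 1 3 x, pd w 1 2 x - pd w 2 1 x])"

text \<open>Riemannian cross product: (a x b)_l = sqrt(det g) eps_{ljk} a^j b^k, then raise the index.\<close>
definition gcross :: "(real^3 \<Rightarrow> real^3^3) \<Rightarrow> real^3 \<Rightarrow> real^3 \<Rightarrow> real^3 \<Rightarrow> real^3" where
  "gcross g x a b = sqrt (det (g x)) *\<^sub>R (matrix_inv (g x) *v cross3 a b)"

definition poisson :: "(real^3 \<Rightarrow> real^3^3) \<Rightarrow> (real^3) set \<Rightarrow> (real^3 \<Rightarrow> real^3) \<Rightarrow> bool" where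
  "poisson g U J \<longleftrightarrow> (\<forall>x\<in>U. ginner g x (J x) (curl g J x) = 0)"

definition compatible :: "(real^3 \<Rightarrow> real^3^3) \<Rightarrow> (real^3) set \<Rightarrow> (real^3 \<Rightarrow> real^3) \<Rightarrow> (real^3 \<Rightarrow> real^3) \<Rightarrow> bool" where
  "compatible g U J1 J2 \<longleftrightarrow> poisson g U J1 \<and> poisson g U J2 \<and> poisson g U (\<lambda>x. J1 x + J2 x)"

end

theory Submission
  imports Defs
begin

definition curlE :: "(real^3 \<Rightarrow> real^3) \<Rightarrow> real^3 \<Rightarrow> real^3" where
  "curlE w x = vector [pd w 2 3 x - pd w 3 2 x, pd w 3 1 x - pd w 1 3 x, pd w 1 2 x - pd w 2 1 x]"

lemma lin_comp3:
  fixes L :: "real^3 \<Rightarrow> real^3"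
  assumes "linear L"
  shows "L a $ k = a$1 * L (axis 1 1) $ k + a$2 * L (axis 2 1) $ k + a$3 * L (axis 3 1) $ k"
proof -
  have "Vector_Spaces.linear (*s) (*s) L" using assms
    by (simp add: linear_matrix_vector_mul_eq)
  from Cartesian_Space.linear_componentwise[OF this, of a k] show ?thesis by (simp only: sum_3)
qed

lemma curlE_cross:
  assumes "linear L" "frechet_derivative w (at x) = L"
  shows "curlE w x \<bullet> (cross3 a b) = L a \<bullet> b - L b \<bullet> a"
proof -
  have ia: "\<And>k. L a $ k = a$1 * L (axis 1 1) $ k + a$2 * L (axis 2 1) $ k + a$3 * L (axis 3 1) $ k"
    by (rule lin_comp3[OF assms(1)])
  have ib: "\<And>k. L b $ k = b$1 * L (axis 1 1) $ k + b$2 * L (axis 2 1) $ k + b$3 * L (axis 3 1) $ k"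
    by (rule lin_comp3[OF assms(1)])
  have "curlE w x \<bullet> (cross3 a b) = (L (axis 2 1) $ 3 - L (axis 3 1) $ 2) * (a$2 * b$3 - a$3 * b$2)
     + (L (axis 3 1) $ 1 - L (axis 1 1) $ 3) * (a$3 * b$1 - a$1 * b$3)
     + (L (axis 1 1) $ 2 - L (axis 2 1) $ 1) * (a$1 * b$2 - a$2 * b$1)"
    unfolding curlE_def pd_def assms(2) inner_vec_def sum_3 cross3_def vector_3 inner_real_def by simp
  moreover have "L a \<bullet> b - L b \<bullet> a = L a $ 1 * b $ 1 + L a $ 2 * b $ 2 + L a $ 3 * b $ 3
     - (L b $ 1 * a $ 1 + L b $ 2 * a $ 2 + L b $ 3 * a $ 3)"
    unfolding inner_vec_def sum_3 inner_real_def by simp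
  ultimately show ?thesis unfolding ia ib by (simp add: algebra_simps)
qed

lemma dd_has: "(f has_derivative f') (at x) \<Longrightarrow> dderiv f X x = f' (X x)"
  unfolding dderiv_def using frechet_derivative_at by metis

lemma dw_formula:
  assumes w: "w differentiable (at x)" and X: "X differentiable (at x)" and Y: "Y differentiable (at x)"
  shows "curlE w x \<bullet> cross3 (X x) (Y x) = dderiv (\<lambda>y. w y \<bullet> Y y) X x - dderiv (\<lambda>y. w y \<bullet> X y) Y x - w x \<bullet> lie_bracket X Y x"
proof -
  define Lw where "Lw = frechet_derivative w (at x)"
  define LX where "LX = frechet_derivative X (at x)"
  define LY where "LY = frechet_derivative Y (at x)"
  have dw: "(w has_derivative Lw) (at x)" using w Lw_def frechet_derivative_works by blast
  have dX: "(X has_derivative LX) (at x)" using X LX_def frechet_derivative_works by blast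
  have dY: "(Y has_derivative LY) (at x)" using Y LY_def frechet_derivative_works by blast
  have lin: "linear Lw" using w Lw_def linear_frechet_derivative by blast
  have "((\<lambda>y. w y \<bullet> Y y) has_derivative (\<lambda>h. w x \<bullet> LY h + Lw h \<bullet> Y x)) (at x)"
    using has_derivative_inner[OF dw dY] by simp
  hence e1: "dderiv (\<lambda>y. w y \<bullet> Y y) X x = w x \<bullet> LY (X x) + Lw (X x) \<bullet> Y x" by (rule dd_has)
  have "((\<lambda>y. w y \<bullet> X y) has_derivative (\<lambda>h. w x \<bullet> LX h + Lw h \<bullet> X x)) (at x)"
    using has_derivative_inner[OF dw dX] by simp
  hence e2: "dderiv (\<lambda>y. w y \<bullet> X y) Y x = w x \<bullet> LX (Y x) + Lw (Y x) \<bullet> X x" by (rule dd_has)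
  have e3: "lie_bracket X Y x = LY (X x) - LX (Y x)"
    unfolding lie_bracket_def dderiv_def LX_def LY_def by simp
  show ?thesis using curlE_cross[OF lin Lw_def[symmetric]] unfolding e1 e2 e3
    by (simp add: inner_diff_right algebra_simps)
qed

lemma sym_inner: "transpose A = A \<Longrightarrow> x \<bullet> (A *v y) = (A *v x) \<bullet> (y::real^'n)"
  by (metis dot_lmul_matrix vector_transpose_matrix)

lemma gram_mat:
  fixes A :: "real^3^3"
  shows "(vector[x,y,z] :: real^3^3) ** A ** transpose (vector[p,q,r]) =
    (vector[vector[x\<bullet>(A*v p), x\<bullet>(A*v q), x\<bullet>(A*v r)],
           vector[y\<bullet>(A*v p), y\<bullet>(A*v q), y\<bullet>(A*v r)],
           vector[z\<bullet>(A*v p), z\<bullet>(A*v q), z\<bullet>(A*v r)]] :: real^3^3)"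
proof -
  have "\<And>i j. ((vector[x,y,z] :: real^3^3) ** A ** transpose (vector[p,q,r])) $ i $ j =
    (vector[vector[x\<bullet>(A*v p), x\<bullet>(A*v q), x\<bullet>(A*v r)],
           vector[y\<bullet>(A*v p), y\<bullet>(A*v q), y\<bullet>(A*v r)],
           vector[z\<bullet>(A*v p), z\<bullet>(A*v q), z\<bullet>(A*v r)]] :: real^3^3) $ i $ j"
  proof -
    fix i j :: 3
    show "?thesis i j"
    using exhaust_3[of i] exhaust_3[of j]
    by (auto simp add: matrix_matrix_mult_def transpose_def matrix_vector_mult_def inner_vec_def sum_3 algebra_simps)
  qed
  then show ?thesis by (simp add: vec_eq_iff)
qed

lemma det_gram:
  fixes A :: "real^3^3"
  shows "det (vector[x,y,z] :: real^3^3) * det A * det (vector[p,q,r] :: real^3^3) =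
    (x\<bullet>(A*v p)) * (y\<bullet>(A*v q)) * (z\<bullet>(A*v r)) - (x\<bullet>(A*v p)) * (y\<bullet>(A*v r)) * (z\<bullet>(A*v q))
  - (x\<bullet>(A*v q)) * (y\<bullet>(A*v p)) * (z\<bullet>(A*v r)) + (x\<bullet>(A*v q)) * (y\<bullet>(A*v r)) * (z\<bullet>(A*v p))
  + (x\<bullet>(A*v r)) * (y\<bullet>(A*v p)) * (z\<bullet>(A*v q)) - (x\<bullet>(A*v r)) * (y\<bullet>(A*v q)) * (z\<bullet>(A*v p))" (is "?lhs = ?rhs")
proof -
  have "det (vector[x,y,z] :: real^3^3) * det A * det (vector[p,q,r] :: real^3^3)
     = det ((vector[x,y,z] :: real^3^3) ** A ** transpose (vector[p,q,r]))"
    by (simp add: det_mul)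
  also have "\<dots> = ?rhs" unfolding gram_mat det_3 by (simp add: algebra_simps)
  finally show ?thesis .
qed

lemma dual3:
  fixes e1 e2 e3 t1 t2 t3 c :: "real^3"
  assumes "e1 \<bullet> t1 = 1" "e1 \<bullet> t2 = 0" "e1 \<bullet> t3 = 0"
    "e2 \<bullet> t1 = 0" "e2 \<bullet> t2 = 1" "e2 \<bullet> t3 = 0"
    "e3 \<bullet> t1 = 0" "e3 \<bullet> t2 = 0" "e3 \<bullet> t3 = 1"
  shows "det (vector[e1,e2,e3] :: real^3^3) \<noteq> 0"
    "det (vector[e1,e2,e3] :: real^3^3) * (t2 \<bullet> c) = c \<bullet> cross3 e3 e1"
    "det (vector[e1,e2,e3] :: real^3^3) * (t3 \<bullet> c) = c \<bullet> cross3 e1 e2"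
proof -
  define T where "T = det (vector[t1,t2,t3] :: real^3^3)"
  have h1: "det (vector[e1,e2,e3] :: real^3^3) * T = 1"
    using det_gram[of e1 e2 e3 "mat 1" t1 t2 t3] assms unfolding T_def by simp
  have h2: "(c \<bullet> cross3 e3 e1) * T = t2 \<bullet> c"
    using det_gram[of c e3 e1 "mat 1" t1 t2 t3] assms unfolding T_def
    by (simp add: dot_cross_det inner_commute)
  have h3: "(c \<bullet> cross3 e1 e2) * T = t3 \<bullet> c"
    using det_gram[of c e1 e2 "mat 1" t1 t2 t3] assms unfolding T_def
    by (simp add: dot_cross_det inner_commute)
  show "det (vector[e1,e2,e3] :: real^3^3) \<noteq> 0" using h1 by auto
  show "det (vector[e1,e2,e3] :: real^3^3) * (t2 \<bullet> c) = c \<bullet> cross3 e3 e1"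
    unfolding h2[symmetric] using h1 by (metis mult.commute mult.left_commute mult_1_right)
  show "det (vector[e1,e2,e3] :: real^3^3) * (t3 \<bullet> c) = c \<bullet> cross3 e1 e2"
    unfolding h3[symmetric] using h1 by (metis mult.commute mult.left_commute mult_1_right)
qed

lemma triple_cyc: "a \<bullet> cross3 b c = c \<bullet> cross3 a b"
  by (simp add: cross3_def inner_vec_def sum_3 algebra_simps)

lemma cross_nz:
  fixes G :: "real^3^3"
  assumes sym: "transpose G = G"
    and a: "a \<bullet> (G *v a) = 1" and b: "b \<bullet> (G *v b) = 1" and ab: "a \<bullet> (G *v b) = 0"
  shows "cross3 a b \<noteq> 0"
proof
  assume "cross3 a b = 0"
  hence "collinear {0, a, b}" using cross_eq_0 by simp
  then obtain u where u: "\<forall>x\<in>{0,a,b}. \<forall>y\<in>{0,a,b}. \<exists>c. x - y = c *\<^sub>R u"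
    unfolding collinear_def by blast
  obtain c1 where c1: "a = c1 *\<^sub>R u" using u by force
  obtain c2 where c2: "b = c2 *\<^sub>R u" using u by force
  define q where "q = u \<bullet> (G *v u)"
  have "c1 * c1 * q = 1" using a unfolding c1 q_def by (simp add: matrix_vector_mult_scaleR)
  moreover have "c2 * c2 * q = 1" using b unfolding c2 q_def by (simp add: matrix_vector_mult_scaleR)
  moreover have "c1 * c2 * q = 0" using ab unfolding c1 c2 q_def by (auto simp add: matrix_vector_mult_scaleR)
  ultimately have "(c1 * c2 * q) * (c1 * c2 * q) = 1"
    by (metis mult.commute mult.left_commute mult_1_right)
  thus False using \<open>c1 * c2 * q = 0\<close> by simp
qed

lemma gcross_on:
  fixes G :: "real^3^3"
  assumes sym: "transpose G = G" and pd: "\<forall>u. u \<noteq> 0 \<longrightarrow> u \<bullet> (G *v u) > 0"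
    and a: "a \<bullet> (G *v a) = 1" and b: "b \<bullet> (G *v b) = 1" and ab: "a \<bullet> (G *v b) = 0"
    and c: "c = sqrt (det G) *\<^sub>R (matrix_inv G *v cross3 a b)"
  shows "c \<bullet> (G *v c) = 1" "a \<bullet> (G *v c) = 0" "b \<bullet> (G *v c) = 0"
proof -
  have "\<forall>u. G *v u = 0 \<longrightarrow> u = 0" using pd by (metis inner_zero_right less_irrefl)
  then obtain B where "B ** G = mat 1" using matrix_left_invertible_ker by blast
  hence "G ** B = mat 1" using matrix_left_right_inverse by blast
  hence "\<exists>A'. G ** A' = mat 1 \<and> A' ** G = mat 1" using \<open>B ** G = mat 1\<close> by blast
  hence inv: "G ** matrix_inv G = mat 1" unfolding matrix_inv_def by (rule someI_ex[THEN conjunct1])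
  define y where "y = matrix_inv G *v cross3 a b"
  have Gy: "G *v y = cross3 a b" unfolding y_def matrix_vector_mul_assoc inv by simp
  have ynz: "y \<noteq> 0" using Gy cross_nz[OF sym a b ab] by auto
  define m where "m = y \<bullet> (G *v y)"
  have mpos: "m > 0" using pd ynz m_def by auto
  have aGy: "a \<bullet> (G *v y) = 0" unfolding Gy by (simp add: dot_cross_self)
  have bGy: "b \<bullet> (G *v y) = 0" unfolding Gy by (simp add: dot_cross_self)
  have yGa: "y \<bullet> (G *v a) = 0" using aGy sym_inner[OF sym] by (metis inner_commute)
  have yGb: "y \<bullet> (G *v b) = 0" using bGy sym_inner[OF sym] by (metis inner_commute)
  have bGa: "b \<bullet> (G *v a) = 0" using ab sym_inner[OF sym] by (metis inner_commute)
  have dV: "det (vector[a,b,y] :: real^3^3) = m"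
    unfolding dot_cross_det[symmetric] triple_cyc[of a b y] m_def Gy ..
  have "m * det G * m = m"
    using det_gram[of a b y G a b y] unfolding dV
    by (simp add: a b ab bGa aGy bGy yGa yGb m_def[symmetric])
  hence dm: "det G * m = 1" using mpos by (metis mult.commute mult_cancel_left1 mult.left_commute less_irrefl)
  hence dpos: "det G > 0" using mpos by (metis zero_less_mult_pos2 zero_less_one)
  show "c \<bullet> (G *v c) = 1"
  proof -
    have "sqrt (det G) * sqrt (det G) = det G" using dpos by simp
    thus ?thesis unfolding c y_def[symmetric] using dm
      by (simp add: matrix_vector_mult_scaleR m_def[symmetric] mult.assoc[symmetric])
  qed
  show "a \<bullet> (G *v c) = 0"
    unfolding c y_def[symmetric] using aGy by (simp add: matrix_vector_mult_scaleR)
  show "b \<bullet> (G *v c) = 0"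
    unfolding c y_def[symmetric] using bGy by (simp add: matrix_vector_mult_scaleR)
qed

lemma bb_mv: "bounded_bilinear (\<lambda>(A::real^3^3) (v::real^3). A *v v)"
proof -
  have "bilinear (\<lambda>(A::real^3^3) (v::real^3). A *v v)"
    unfolding bilinear_def
  proof (intro conjI allI)
    fix A :: "real^3^3" show "linear (\<lambda>v. A *v v)" by simp
  next
    fix v :: "real^3" show "linear (\<lambda>A::real^3^3. A *v v)"
      by (rule linearI) (simp_all add: matrix_vector_mult_add_rdistrib scaleR_matrix_vector_assoc)
  qed
  thus ?thesis using bilinear_conv_bounded_bilinear by blast
qed

lemma mv_diff:
  fixes A :: "real^3 \<Rightarrow> real^3^3"
  assumes "A differentiable (at x)" "v differentiable (at x)"
  shows "(\<lambda>y. A y *v v y) differentiable (at x)"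
proof -
  obtain A' where "(A has_derivative A') (at x)" using assms(1) differentiable_def by blast
  moreover obtain v' where "(v has_derivative v') (at x)" using assms(2) differentiable_def by blast
  ultimately show ?thesis using bounded_bilinear.FDERIV[OF bb_mv] differentiableI by blast
qed

lemma dd_local:
  assumes "open U" "x \<in> U" "\<forall>y\<in>U. f y = h y" "h differentiable (at x)"
  shows "dderiv f X x = dderiv h X x"
  unfolding dderiv_def
  using frechet_derivative_transform_within_open[of h x U f] assms by auto

lemma dd_const: "dderiv (\<lambda>y. c::real) X x = 0"
  unfolding dderiv_def by simp

lemma poisson_frame:
  fixes g :: "real^3 \<Rightarrow> real^3^3" and E :: "3 \<Rightarrow> real^3 \<Rightarrow> real^3"
    and C :: "3 \<Rightarrow> 3 \<Rightarrow> 3 \<Rightarrow> real^3 \<Rightarrow> real" and f2 f3 :: "real^3 \<Rightarrow> real"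
  assumes U: "open U" "x \<in> U"
    and sym: "\<forall>y\<in>U. transpose (g y) = g y"
    and gd: "g differentiable (at x)"
    and Ed: "\<forall>i. E i differentiable (at x)"
    and orth: "\<forall>y\<in>U. \<forall>i j. ginner g y (E i y) (E j y) = (if i = j then 1 else 0)"
    and Cd: "\<forall>i j. lie_bracket (E i) (E j) x = (\<Sum>k\<in>UNIV. C i j k x *\<^sub>R E k x)"
    and f2d: "f2 differentiable (at x)" and f3d: "f3 differentiable (at x)"
    and P: "f2 x * (- dderiv f3 (E 1) x - C 3 1 2 x * f2 x - C 3 1 3 x * f3 x)
          + f3 x * (dderiv f2 (E 1) x - C 1 2 2 x * f2 x - C 1 2 3 x * f3 x) = 0"
  shows "ginner g x ((\<lambda>y. f2 y *\<^sub>R E 2 y + f3 y *\<^sub>R E 3 y) x)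
           (curl g (\<lambda>y. f2 y *\<^sub>R E 2 y + f3 y *\<^sub>R E 3 y) x) = 0"
proof -
  define J where "J = (\<lambda>y. f2 y *\<^sub>R E 2 y + f3 y *\<^sub>R E 3 y)"
  define w where "w = (\<lambda>y. g y *v J y)"
  have Jd: "J differentiable (at x)" unfolding J_def using Ed f2d f3d
    by (intro differentiable_add differentiable_scaleR) auto
  have wd: "w differentiable (at x)" unfolding w_def using mv_diff[OF gd Jd] .
  define c where "c = curlE w x"
  have curl_eq: "curl g J x = (1 / sqrt (det (g x))) *\<^sub>R c"
    unfolding curl_def c_def curlE_def w_def Let_def by simp
  have symx: "transpose (g x) = g x" using sym U by auto
  have wE: "\<And>y j. y \<in> U \<Longrightarrow> w y \<bullet> E j y = f2 y * ginner g y (E 2 y) (E j y) + f3 y * ginner g y (E 3 y) (E j y)"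
  proof -
    fix y j assume y: "y \<in> U"
    have "w y \<bullet> E j y = J y \<bullet> (g y *v E j y)"
      unfolding w_def using sym_inner[of "g y" "J y" "E j y"] sym y by auto
    thus "?thesis y j" unfolding J_def ginner_def by (simp add: inner_add_left)
  qed
  have wE1: "\<And>y. y \<in> U \<Longrightarrow> w y \<bullet> E 1 y = 0" using wE orth by simp
  have wE2: "\<And>y. y \<in> U \<Longrightarrow> w y \<bullet> E 2 y = f2 y" using wE orth by simp
  have wE3: "\<And>y. y \<in> U \<Longrightarrow> w y \<bullet> E 3 y = f3 y" using wE orth by simp
  have lb: "\<And>i j. w x \<bullet> lie_bracket (E i) (E j) x = C i j 2 x * f2 x + C i j 3 x * f3 x"
    using Cd wE1[OF U(2)] wE2[OF U(2)] wE3[OF U(2)] by (simp add: sum_3 inner_add_right)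
  have d31: "c \<bullet> cross3 (E 3 x) (E 1 x) = - dderiv f3 (E 1) x - C 3 1 2 x * f2 x - C 3 1 3 x * f3 x"
  proof -
    have "c \<bullet> cross3 (E 3 x) (E 1 x) = dderiv (\<lambda>y. w y \<bullet> E 1 y) (E 3) x - dderiv (\<lambda>y. w y \<bullet> E 3 y) (E 1) x - w x \<bullet> lie_bracket (E 3) (E 1) x"
      unfolding c_def using dw_formula[OF wd] Ed by blast
    also have "dderiv (\<lambda>y. w y \<bullet> E 1 y) (E 3) x = 0"
      using dd_local[OF U, of "\<lambda>y. w y \<bullet> E 1 y" "\<lambda>y. 0"] wE1 dd_const by simp
    also have "dderiv (\<lambda>y. w y \<bullet> E 3 y) (E 1) x = dderiv f3 (E 1) x"
      using dd_local[OF U, of "\<lambda>y. w y \<bullet> E 3 y" f3] wE3 f3d by simp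
    finally show ?thesis unfolding lb by simp
  qed
  have d12: "c \<bullet> cross3 (E 1 x) (E 2 x) = dderiv f2 (E 1) x - C 1 2 2 x * f2 x - C 1 2 3 x * f3 x"
  proof -
    have "c \<bullet> cross3 (E 1 x) (E 2 x) = dderiv (\<lambda>y. w y \<bullet> E 2 y) (E 1) x - dderiv (\<lambda>y. w y \<bullet> E 1 y) (E 2) x - w x \<bullet> lie_bracket (E 1) (E 2) x"
      unfolding c_def using dw_formula[OF wd] Ed by blast
    also have "dderiv (\<lambda>y. w y \<bullet> E 1 y) (E 2) x = 0"
      using dd_local[OF U, of "\<lambda>y. w y \<bullet> E 1 y" "\<lambda>y. 0"] wE1 dd_const by simp
    also have "dderiv (\<lambda>y. w y \<bullet> E 2 y) (E 1) x = dderiv f2 (E 1) x"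
      using dd_local[OF U, of "\<lambda>y. w y \<bullet> E 2 y" f2] wE2 f2d by simp
    finally show ?thesis unfolding lb by simp
  qed
  define t where "t = (\<lambda>k. g x *v E k x)"
  have et: "\<And>i j. E i x \<bullet> t j = (if i = j then 1 else 0)"
    using orth U(2) unfolding t_def ginner_def by blast
  define D where "D = det (vector[E 1 x, E 2 x, E 3 x] :: real^3^3)"
  have dual: "D \<noteq> 0" "D * (t 2 \<bullet> c) = c \<bullet> cross3 (E 3 x) (E 1 x)" "D * (t 3 \<bullet> c) = c \<bullet> cross3 (E 1 x) (E 2 x)"
    unfolding D_def using dual3(1)[of "E 1 x" "t 1" "t 2" "t 3" "E 2 x" "E 3 x"]
      dual3(2,3)[of "E 1 x" "t 1" "t 2" "t 3" "E 2 x" "E 3 x" c] et by simp_all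
  have wx: "w x = f2 x *\<^sub>R t 2 + f3 x *\<^sub>R t 3"
    unfolding w_def J_def t_def by (simp add: matrix_vector_right_distrib matrix_vector_mult_scaleR)
  have "D * (w x \<bullet> c) = f2 x * (D * (t 2 \<bullet> c)) + f3 x * (D * (t 3 \<bullet> c))"
    unfolding wx by (simp add: inner_add_left algebra_simps)
  also have "\<dots> = 0" unfolding dual(2,3) d31 d12 using P .
  finally have wc: "w x \<bullet> c = 0" using dual(1) by simp
  have "ginner g x (J x) (curl g J x) = (1 / sqrt (det (g x))) * (J x \<bullet> (g x *v c))"
    unfolding ginner_def curl_eq by (simp add: matrix_vector_mult_scaleR)
  also have "J x \<bullet> (g x *v c) = w x \<bullet> c" unfolding w_def using sym_inner[OF symx] by simp
  finally show ?thesis using wc unfolding J_def by simp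
qed

lemma dd_mult:
  fixes f h :: "real^3 \<Rightarrow> real"
  assumes "f differentiable (at x)" "h differentiable (at x)"
  shows "dderiv (\<lambda>y. f y * h y) X x = dderiv f X x * h x + f x * dderiv h X x"
proof -
  have df: "(f has_derivative frechet_derivative f (at x)) (at x)" using assms frechet_derivative_works by blast
  have dh: "(h has_derivative frechet_derivative h (at x)) (at x)" using assms frechet_derivative_works by blast
  show ?thesis using dd_has[OF has_derivative_mult[OF df dh]] unfolding dderiv_def by (simp add: algebra_simps)
qed

lemma dd_add:
  fixes f h :: "real^3 \<Rightarrow> real"
  assumes "f differentiable (at x)" "h differentiable (at x)"
  shows "dderiv (\<lambda>y. f y + h y) X x = dderiv f X x + dderiv h X x"
proof -
  have df: "(f has_derivative frechet_derivative f (at x)) (at x)" using assms frechet_derivative_works by blast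
  have dh: "(h has_derivative frechet_derivative h (at x)) (at x)" using assms frechet_derivative_works by blast
  show ?thesis using dd_has[OF has_derivative_add[OF df dh]] unfolding dderiv_def by simp
qed

lemma ln_abs_sq: "ln \<bar>t::real\<bar> = ln (t * t) / 2"
proof (cases "t = 0")
  case False
  have "ln (\<bar>t\<bar> * \<bar>t\<bar>) = ln \<bar>t\<bar> + ln \<bar>t\<bar>" using False by (simp add: ln_mult del: abs_mult_self_eq)
  hence "ln (t * t) = ln \<bar>t\<bar> + ln \<bar>t\<bar>" by (simp only: abs_mult_self_eq)
  thus ?thesis by simp
qed simp

lemma dd_lnabs_div:
  fixes a n :: "real^3 \<Rightarrow> real"
  assumes ad: "a differentiable (at x)" and nd: "n differentiable (at x)" and a0: "a x \<noteq> 0" and n0: "n x > 0"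
  shows "dderiv (\<lambda>y. ln \<bar>a y / n y\<bar>) X x = dderiv a X x / a x - dderiv n X x / n x"
proof -
  define a' where "a' = frechet_derivative a (at x)"
  define n' where "n' = frechet_derivative n (at x)"
  have da: "(a has_derivative a') (at x)" using ad a'_def frechet_derivative_works by blast
  have dn: "(n has_derivative n') (at x)" using nd n'_def frechet_derivative_works by blast
  define h where "h = (\<lambda>y. a y / n y)"
  define h' where "h' = (\<lambda>t. - a x * (inverse (n x) * n' t * inverse (n x)) + a' t / n x)"
  have dh: "(h has_derivative h') (at x)" unfolding h_def h'_def
    using has_derivative_divide[OF da dn] n0 by simp
  have hx: "h x \<noteq> 0" using a0 n0 h_def by simp
  have dhh: "((\<lambda>y. h y * h y) has_derivative (\<lambda>t. h x * h' t + h' t * h x)) (at x)"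
    using has_derivative_mult[OF dh dh] .
  have dl: "((\<lambda>y. ln (h y * h y)) has_derivative (\<lambda>t. (h x * h' t + h' t * h x) * inverse (h x * h x))) (at x)"
  proof -
    have "0 < h x * h x" using hx by (auto simp add: zero_less_mult_iff linorder_neq_iff)
    thus ?thesis using has_derivative_ln[OF _ dhh] by simp
  qed
  have dl2: "((\<lambda>y. ln (h y * h y) / 2) has_derivative (\<lambda>t. (h x * h' t + h' t * h x) * inverse (h x * h x) / 2)) (at x)"
    using has_derivative_divide[OF dl has_derivative_const[of 2]] by simp
  have feq: "(\<lambda>y. ln \<bar>a y / n y\<bar>) = (\<lambda>y. ln (h y * h y) / 2)"
    unfolding h_def using ln_abs_sq by presburger
  have "dderiv (\<lambda>y. ln \<bar>a y / n y\<bar>) X x = (h x * h' (X x) + h' (X x) * h x) * inverse (h x * h x) / 2"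
    unfolding feq using dd_has[OF dl2] .
  also have "\<dots> = h' (X x) / h x" using hx by (simp add: field_simps)
  also have "\<dots> = a' (X x) / a x - n' (X x) / n x"
    unfolding h'_def h_def using a0 n0 by (simp add: field_simps)
  finally show ?thesis unfolding dderiv_def a'_def n'_def .
qed

lemma sqrt_diff:
  fixes q :: "real^3 \<Rightarrow> real"
  assumes "q differentiable (at x)" "q x > 0"
  shows "(\<lambda>y. sqrt (q y)) differentiable (at x)"
proof -
  obtain q' where q': "(q has_derivative q') (at x)" using assms differentiable_def by blast
  show ?thesis using has_derivative_real_sqrt[OF assms(2) q'] differentiableI by blast
qed

theorem corollary1:
  fixes U :: "(real^3) set" and g :: "real^3 \<Rightarrow> real^3^3"
    and v :: "real^3 \<Rightarrow> real^3" and E :: "3 \<Rightarrow> real^3 \<Rightarrow> real^3"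
    and C :: "3 \<Rightarrow> 3 \<Rightarrow> 3 \<Rightarrow> real^3 \<Rightarrow> real"
    and mu1 mu2 a1 a2 :: "real^3 \<Rightarrow> real"
  assumes metric: "riem_metric g U"
    and v_nz: "\<forall>x\<in>U. v x \<noteq> 0"
    and v_diff: "\<forall>x\<in>U. v differentiable (at x)"
    and E1: "\<forall>x\<in>U. E 1 x = (1 / gnorm g x (v x)) *\<^sub>R v x"
    and E2_unit: "\<forall>x\<in>U. ginner g x (E 2 x) (E 2 x) = 1"
    and E12_orth: "\<forall>x\<in>U. ginner g x (E 1 x) (E 2 x) = 0"
    and E3: "\<forall>x\<in>U. E 3 x = gcross g x (E 1 x) (E 2 x)"
    and E_diff: "\<forall>i. \<forall>x\<in>U. E i differentiable (at x)"
    and C_def: "\<forall>x\<in>U. \<forall>i j. lie_bracket (E i) (E j) x = (\<Sum>k\<in>UNIV. C i j k x *\<^sub>R E k x)"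
    and mu1_diff: "\<forall>x\<in>U. mu1 differentiable (at x)"
    and mu2_diff: "\<forall>x\<in>U. mu2 differentiable (at x)"
    and mu1_eq: "\<forall>x\<in>U. dderiv mu1 (E 1) x =
        - C 3 1 2 x - mu1 x * (C 3 1 3 x + C 1 2 2 x) - (mu1 x)\<^sup>2 * C 1 2 3 x"
    and mu2_eq: "\<forall>x\<in>U. dderiv mu2 (E 1) x =
        - C 3 1 2 x - mu2 x * (C 3 1 3 x + C 1 2 2 x) - (mu2 x)\<^sup>2 * C 1 2 3 x"
    and mu_neq: "\<forall>x\<in>U. mu1 x \<noteq> mu2 x"
    and a1_nz: "\<forall>x\<in>U. a1 x \<noteq> 0"
    and a2_nz: "\<forall>x\<in>U. a2 x \<noteq> 0"
    and a1_diff: "\<forall>x\<in>U. a1 differentiable (at x)"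
    and a2_diff: "\<forall>x\<in>U. a2 differentiable (at x)"
    and a1_eq: "\<forall>x\<in>U. dderiv (\<lambda>y. ln \<bar>a1 y / gnorm g y (v y)\<bar>) (E 1) x
        = C 3 1 3 x + mu1 x * C 1 2 3 x"
    and a2_eq: "\<forall>x\<in>U. dderiv (\<lambda>y. ln \<bar>a2 y / gnorm g y (v y)\<bar>) (E 1) x
        = C 3 1 3 x + mu2 x * C 1 2 3 x"
  shows "compatible g U (\<lambda>x. a1 x *\<^sub>R (E 2 x + mu1 x *\<^sub>R E 3 x))
                        (\<lambda>x. a2 x *\<^sub>R (E 2 x + mu2 x *\<^sub>R E 3 x))"
proof -
  have Uo: "open U" using metric riem_metric_def by blast
  have sym: "\<forall>y\<in>U. transpose (g y) = g y" using metric riem_metric_def by blast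
  have pdg: "\<forall>y\<in>U. \<forall>u. u \<noteq> 0 \<longrightarrow> u \<bullet> (g y *v u) > 0" using metric riem_metric_def by blast
  have gdiff: "\<forall>y\<in>U. g differentiable (at y)" using metric riem_metric_def by blast
  have orth: "\<forall>y\<in>U. \<forall>i j. ginner g y (E i y) (E j y) = (if i = j then 1 else 0)"
  proof (intro ballI allI)
    fix y i j assume y: "y \<in> U"
    define G where "G = g y"
    have symG: "transpose G = G" using sym y G_def by blast
    have vpos: "v y \<bullet> (G *v v y) > 0" using pdg v_nz y G_def by blast
    have e11: "E 1 y \<bullet> (G *v E 1 y) = 1"
    proof -
      have n: "gnorm g y (v y) = sqrt (v y \<bullet> (G *v v y))" unfolding gnorm_def ginner_def G_def ..
      have "sqrt (v y \<bullet> (G *v v y)) * sqrt (v y \<bullet> (G *v v y)) = v y \<bullet> (G *v v y)" using vpos by simp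
      moreover have "E 1 y = (1 / sqrt (v y \<bullet> (G *v v y))) *\<^sub>R v y" using E1 y n by simp
      ultimately show ?thesis using vpos
        by (simp add: matrix_vector_mult_scaleR)
    qed
    have e22: "E 2 y \<bullet> (G *v E 2 y) = 1" using E2_unit y unfolding ginner_def G_def by blast
    have e12: "E 1 y \<bullet> (G *v E 2 y) = 0" using E12_orth y unfolding ginner_def G_def by blast
    have e3: "E 3 y = sqrt (det G) *\<^sub>R (matrix_inv G *v cross3 (E 1 y) (E 2 y))"
      using E3 y unfolding gcross_def G_def by blast
    have pdG: "\<forall>u. u \<noteq> 0 \<longrightarrow> u \<bullet> (G *v u) > 0" using pdg y G_def by blast
    note gc = gcross_on[OF symG pdG e11 e22 e12 e3]
    have sw: "\<And>a b. a \<bullet> (G *v b) = b \<bullet> (G *v a)" using sym_inner[OF symG] by (metis inner_commute)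
    show "ginner g y (E i y) (E j y) = (if i = j then 1 else 0)"
      unfolding ginner_def G_def[symmetric]
      using exhaust_3[of i] exhaust_3[of j] e11 e22 e12 gc sw[of "E 1 y" "E 2 y"]
        sw[of "E 1 y" "E 3 y"] sw[of "E 2 y" "E 3 y"]
      by auto
  qed
  have key: "ginner g x ((\<lambda>y. f2 y *\<^sub>R E 2 y + f3 y *\<^sub>R E 3 y) x)
           (curl g (\<lambda>y. f2 y *\<^sub>R E 2 y + f3 y *\<^sub>R E 3 y) x) = 0"
    if x: "x \<in> U" and f2d: "f2 differentiable (at x)" and f3d: "f3 differentiable (at x)"
    and P: "f2 x * (- dderiv f3 (E 1) x - C 3 1 2 x * f2 x - C 3 1 3 x * f3 x)
          + f3 x * (dderiv f2 (E 1) x - C 1 2 2 x * f2 x - C 1 2 3 x * f3 x) = 0" for x f2 f3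
  proof -
    have EdX: "\<forall>i. E i differentiable (at x)" using E_diff x by blast
    have CdX: "\<forall>i j. lie_bracket (E i) (E j) x = (\<Sum>k\<in>UNIV. C i j k x *\<^sub>R E k x)" using C_def x by blast
    show ?thesis using poisson_frame[of U x g E C f2 f3, OF Uo x sym gdiff[rule_format, OF x] EdX orth CdX f2d f3d P] by simp
  qed
  define n where "n = (\<lambda>y. gnorm g y (v y))"
  have nd: "n differentiable (at x)" "n x > 0" if x: "x \<in> U" for x
  proof -
    have q: "(\<lambda>y. v y \<bullet> (g y *v v y)) differentiable (at x)"
      using mv_diff[OF gdiff[rule_format, OF x] v_diff[rule_format, OF x]] v_diff x
      by (intro differentiable_inner) auto
    have qp: "v x \<bullet> (g x *v v x) > 0" using pdg v_nz x by blast
    show "n differentiable (at x)" using sqrt_diff[OF q qp] unfolding n_def gnorm_def ginner_def .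
    show "n x > 0" using qp unfolding n_def gnorm_def ginner_def by simp
  qed
  have Aeq: "dderiv a (E 1) y = a y * (dderiv n (E 1) y / n y + C 3 1 3 y + m y * C 1 2 3 y)"
    if y: "y \<in> U" and ad: "\<forall>x\<in>U. a differentiable (at x)" and anz: "\<forall>x\<in>U. a x \<noteq> 0"
    and aeq: "\<forall>x\<in>U. dderiv (\<lambda>y. ln \<bar>a y / gnorm g y (v y)\<bar>) (E 1) x = C 3 1 3 x + m x * C 1 2 3 x"
    for a m y
  proof -
    have "dderiv a (E 1) y / a y - dderiv n (E 1) y / n y = C 3 1 3 y + m y * C 1 2 3 y"
      using dd_lnabs_div[of a y n "E 1"] ad anz nd[OF y] aeq y unfolding n_def by auto
    thus ?thesis using anz y by (simp add: field_simps)
  qed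
  show ?thesis
    unfolding compatible_def poisson_def
  proof (intro conjI ballI)
    fix x assume x: "x \<in> U"
    define K where "K = dderiv n (E 1) x / n x"
    have A1: "dderiv a1 (E 1) x = a1 x * (K + C 3 1 3 x + mu1 x * C 1 2 3 x)"
      unfolding K_def using Aeq[OF x a1_diff a1_nz a1_eq] .
    have A2: "dderiv a2 (E 1) x = a2 x * (K + C 3 1 3 x + mu2 x * C 1 2 3 x)"
      unfolding K_def using Aeq[OF x a2_diff a2_nz a2_eq] .
    have M1: "dderiv mu1 (E 1) x = - C 3 1 2 x - mu1 x * (C 3 1 3 x + C 1 2 2 x) - (mu1 x)\<^sup>2 * C 1 2 3 x"
      using mu1_eq x by blast
    have M2: "dderiv mu2 (E 1) x = - C 3 1 2 x - mu2 x * (C 3 1 3 x + C 1 2 2 x) - (mu2 x)\<^sup>2 * C 1 2 3 x"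
      using mu2_eq x by blast
    have a1d: "a1 differentiable (at x)" using a1_diff x by blast
    have a2d: "a2 differentiable (at x)" using a2_diff x by blast
    have m1d: "mu1 differentiable (at x)" using mu1_diff x by blast
    have m2d: "mu2 differentiable (at x)" using mu2_diff x by blast
    have p1d: "(\<lambda>y. a1 y * mu1 y) differentiable (at x)" using a1d m1d by simp
    have p2d: "(\<lambda>y. a2 y * mu2 y) differentiable (at x)" using a2d m2d by simp
    have D1: "dderiv (\<lambda>y. a1 y * mu1 y) (E 1) x = dderiv a1 (E 1) x * mu1 x + a1 x * dderiv mu1 (E 1) x"
      using dd_mult[OF a1d m1d] .
    have D2: "dderiv (\<lambda>y. a2 y * mu2 y) (E 1) x = dderiv a2 (E 1) x * mu2 x + a2 x * dderiv mu2 (E 1) x"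
      using dd_mult[OF a2d m2d] .
    have F1: "(\<lambda>x. a1 x *\<^sub>R (E 2 x + mu1 x *\<^sub>R E 3 x)) = (\<lambda>y. a1 y *\<^sub>R E 2 y + (a1 y * mu1 y) *\<^sub>R E 3 y)"
      by (simp add: fun_eq_iff scaleR_add_right)
    have F2: "(\<lambda>x. a2 x *\<^sub>R (E 2 x + mu2 x *\<^sub>R E 3 x)) = (\<lambda>y. a2 y *\<^sub>R E 2 y + (a2 y * mu2 y) *\<^sub>R E 3 y)"
      by (simp add: fun_eq_iff scaleR_add_right)
    have F3: "(\<lambda>x. a1 x *\<^sub>R (E 2 x + mu1 x *\<^sub>R E 3 x) + a2 x *\<^sub>R (E 2 x + mu2 x *\<^sub>R E 3 x))
       = (\<lambda>y. (a1 y + a2 y) *\<^sub>R E 2 y + (a1 y * mu1 y + a2 y * mu2 y) *\<^sub>R E 3 y)"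
      by (simp add: fun_eq_iff scaleR_add_right scaleR_add_left)
    show "ginner g x (a1 x *\<^sub>R (E 2 x + mu1 x *\<^sub>R E 3 x)) (curl g (\<lambda>x. a1 x *\<^sub>R (E 2 x + mu1 x *\<^sub>R E 3 x)) x) = 0"
    proof -
      have "a1 x * (- dderiv (\<lambda>y. a1 y * mu1 y) (E 1) x - C 3 1 2 x * a1 x - C 3 1 3 x * (a1 x * mu1 x))
          + (a1 x * mu1 x) * (dderiv a1 (E 1) x - C 1 2 2 x * a1 x - C 1 2 3 x * (a1 x * mu1 x)) = 0"
        unfolding D1 A1 M1 by (simp add: algebra_simps power2_eq_square)
      from key[OF x a1d p1d this] show ?thesis by (simp only: F1 fun_cong[OF F1])
    qed
    show "ginner g x (a2 x *\<^sub>R (E 2 x + mu2 x *\<^sub>R E 3 x)) (curl g (\<lambda>x. a2 x *\<^sub>R (E 2 x + mu2 x *\<^sub>R E 3 x)) x) = 0"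
    proof -
      have "a2 x * (- dderiv (\<lambda>y. a2 y * mu2 y) (E 1) x - C 3 1 2 x * a2 x - C 3 1 3 x * (a2 x * mu2 x))
          + (a2 x * mu2 x) * (dderiv a2 (E 1) x - C 1 2 2 x * a2 x - C 1 2 3 x * (a2 x * mu2 x)) = 0"
        unfolding D2 A2 M2 by (simp add: algebra_simps power2_eq_square)
      from key[OF x a2d p2d this] show ?thesis by (simp only: F2 fun_cong[OF F2])
    qed
    show "ginner g x (a1 x *\<^sub>R (E 2 x + mu1 x *\<^sub>R E 3 x) + a2 x *\<^sub>R (E 2 x + mu2 x *\<^sub>R E 3 x))
      (curl g (\<lambda>x. a1 x *\<^sub>R (E 2 x + mu1 x *\<^sub>R E 3 x) + a2 x *\<^sub>R (E 2 x + mu2 x *\<^sub>R E 3 x)) x) = 0"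
    proof -
      have sd: "(\<lambda>y. a1 y + a2 y) differentiable (at x)" using a1d a2d by simp
      have td: "(\<lambda>y. a1 y * mu1 y + a2 y * mu2 y) differentiable (at x)" using p1d p2d by simp
      have S: "dderiv (\<lambda>y. a1 y + a2 y) (E 1) x = dderiv a1 (E 1) x + dderiv a2 (E 1) x"
        using dd_add[OF a1d a2d] .
      have T: "dderiv (\<lambda>y. a1 y * mu1 y + a2 y * mu2 y) (E 1) x
          = dderiv (\<lambda>y. a1 y * mu1 y) (E 1) x + dderiv (\<lambda>y. a2 y * mu2 y) (E 1) x"
        using dd_add[OF p1d p2d] .
      have "(a1 x + a2 x) * (- dderiv (\<lambda>y. a1 y * mu1 y + a2 y * mu2 y) (E 1) x - C 3 1 2 x * (a1 x + a2 x) - C 3 1 3 x * (a1 x * mu1 x + a2 x * mu2 x))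
          + (a1 x * mu1 x + a2 x * mu2 x) * (dderiv (\<lambda>y. a1 y + a2 y) (E 1) x - C 1 2 2 x * (a1 x + a2 x) - C 1 2 3 x * (a1 x * mu1 x + a2 x * mu2 x)) = 0"
        unfolding S T D1 D2 A1 A2 M1 M2 by (simp add: algebra_simps power2_eq_square)
      from key[OF x sd td this] show ?thesis by (simp only: F3 fun_cong[OF F3])
    qed
  qed
qed

end
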